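(* For every integer $n \geq 7$, the quotient $\mathbb{Z}[\operatorname{SL}_2(\mathbb{Z})]/((u-1)^n)$ of the group ring by the two-sided ideal generated by $(u-1)^n$ is not a finitely generated $\mathbb{Z}$-module.
   Context: $u = \begin{pmatrix}1 & 1 \\ 0 & 1\end{pmatrix}\in\operatorname{SL}_2(\mathbb{Z})$, and $\mathbb{Z}[\operatorname{SL}_2(\mathbb{Z})]$ is the integral group ring of the abstract group $\operatorname{SL}_2(\mathbb{Z})$. *)

theory Defs
  imports "HOL-Analysis.Analysis" "HOL-Library.Poly_Mapping"
begin

typedef sl2z = "{A :: int^2^2. det A = 1}"
  morphisms sl2_mat Abs_sl2z
  by (rule exI[of _ "mat 1"]) (simp add: det_I)

text \<open>In order to reuse the
  group-ring (convolution) multiplication of HOL-Library.Poly_Mapping, which is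
  phrased for index types of class monoid_add, we write the (non-commutative)
  group law of SL_2(Z) additively: 0 is the identity matrix and g + h is the
  matrix product g h.\<close>

instantiation sl2z :: monoid_add
begin
definition zero_sl2z :: sl2z where "zero_sl2z = Abs_sl2z (mat 1)"
definition plus_sl2z :: "sl2z \<Rightarrow> sl2z \<Rightarrow> sl2z"
  where "plus_sl2z g h = Abs_sl2z (sl2_mat g ** sl2_mat h)"
instance
proof
  fix a b c :: sl2z
  have m: "det (sl2_mat x) = 1" for x using sl2_mat[of x] by simp
  have mm: "sl2_mat (x + y) = sl2_mat x ** sl2_mat y" for x y
    unfolding plus_sl2z_def
    by (rule Abs_sl2z_inverse) (simp add: det_mul m)
  show "a + b + c = a + (b + c)"
    by (rule sl2_mat_inject[THEN iffD1]) (simp add: mm matrix_mul_assoc)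
  have z: "sl2_mat 0 = mat 1"
    unfolding zero_sl2z_def by (rule Abs_sl2z_inverse) (simp add: det_I)
  show "0 + a = a"
    by (rule sl2_mat_inject[THEN iffD1]) (simp add: mm z)
  show "a + 0 = a"
    by (rule sl2_mat_inject[THEN iffD1]) (simp add: mm z)
qed
end

definition u_mat :: "int^2^2" where
  "u_mat = (\<chi> i j. if i = 2 \<and> j = 1 then 0 else 1)"

lemma u_mat_det: "det u_mat = 1"
  by (simp add: det_2 u_mat_def)

definition u :: sl2z where "u = Abs_sl2z u_mat"

type_synonym zsl2 = "sl2z \<Rightarrow>\<^sub>0 int"

definition grp_elt :: "sl2z \<Rightarrow> zsl2" where
  "grp_elt g = Poly_Mapping.single g 1"

definition twosided_ideal_gen :: "'a::ring_1 \<Rightarrow> 'a set" where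
  "twosided_ideal_gen x = {(\<Sum>i<m. a i * x * b i) | (m::nat) a b. True}"

definition quotient_fg_Z_module :: "'a::ring_1 set \<Rightarrow> bool" where
  "quotient_fg_Z_module I \<longleftrightarrow>
     (\<exists>S. finite S \<and> (\<forall>r. \<exists>c :: 'a \<Rightarrow> int. r - (\<Sum>s\<in>S. of_int (c s) * s) \<in> I))"

end

theory Submission
  imports Defs
begin


datatype z2 = Z2 int int int int

instantiation z2 :: monoid_mult
begin
definition one_z2 :: z2 where "one_z2 = Z2 1 0 0 1"
fun times_z2 :: "z2 \<Rightarrow> z2 \<Rightarrow> z2" where
  "times_z2 (Z2 a b c d) (Z2 e f g h) = Z2 (a*e+b*g) (a*f+b*h) (c*e+d*g) (c*f+d*h)"
instance
proof
  fix x y z :: z2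
  show "x * y * z = x * (y * z)"
    by (cases x; cases y; cases z) (simp add: algebra_simps)
  show "1 * x = x" by (cases x) (simp add: one_z2_def)
  show "x * 1 = x" by (cases x) (simp add: one_z2_def)
qed
end

fun zdet :: "z2 \<Rightarrow> int" where "zdet (Z2 a b c d) = a*d - b*c"

lemma zdet_mult: "zdet (x * y) = zdet x * zdet y"
  by (cases x; cases y) (simp add: algebra_simps)

lemma zdet_one[simp]: "zdet 1 = 1" by (simp add: one_z2_def)

definition toz :: "sl2z \<Rightarrow> z2" where
  "toz g = Z2 (sl2_mat g $ 1 $ 1) (sl2_mat g $ 1 $ 2) (sl2_mat g $ 2 $ 1) (sl2_mat g $ 2 $ 2)"

lemma sl2_mat_plus: "sl2_mat (x + y) = sl2_mat x ** sl2_mat y"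
proof -
  have m: "det (sl2_mat x) = 1" for x using sl2_mat[of x] by simp
  show ?thesis unfolding plus_sl2z_def
    by (rule Abs_sl2z_inverse) (simp add: det_mul m)
qed

lemma sl2_mat_zero: "sl2_mat 0 = mat 1"
  unfolding zero_sl2z_def by (rule Abs_sl2z_inverse) (simp add: det_I)

lemma toz_plus: "toz (x + y) = toz x * toz y"
  by (simp add: toz_def sl2_mat_plus matrix_matrix_mult_def sum_2)

lemma toz_zero: "toz 0 = 1"
  by (simp add: toz_def sl2_mat_zero one_z2_def mat_def)

lemma toz_det: "zdet (toz g) = 1"
proof -
  have "det (sl2_mat g) = 1" using sl2_mat[of g] by simp
  then show ?thesis by (simp add: toz_def det_2)
qed

lemma toz_inj: "toz x = toz y \<Longrightarrow> x = y"
  apply (rule sl2_mat_inject[THEN iffD1])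
  apply (simp add: toz_def vec_eq_iff forall_2)
  done

definition ofz :: "z2 \<Rightarrow> sl2z" where
  "ofz M = (case M of Z2 a b c d \<Rightarrow>
     Abs_sl2z (\<chi> i j. if i = 1 then (if j = 1 then a else b) else (if j = 1 then c else d)))"

lemma toz_ofz: assumes "zdet M = 1" shows "toz (ofz M) = M"
proof (cases M)
  case (Z2 a b c d)
  let ?A = "(\<chi> i j. if i = 1 then (if j = 1 then a else b) else (if j = 1 then c else d)) :: int^2^2"
  have "det ?A = 1" using assms Z2 by (simp add: det_2)
  then have "sl2_mat (Abs_sl2z ?A) = ?A" by (simp add: Abs_sl2z_inverse)
  then show ?thesis using Z2 by (simp add: ofz_def toz_def)
qed

lemma toz_u: "toz u = Z2 1 1 0 1"
proof -
  have "sl2_mat u = u_mat" unfolding u_def by (rule Abs_sl2z_inverse) (simp add: u_mat_det)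
  then show ?thesis by (simp add: toz_def u_mat_def)
qed


definition zS :: z2 where "zS = Z2 0 (-1) 1 0"
definition zR :: z2 where "zR = Z2 0 (-1) 1 1"
definition zT :: z2 where "zT = Z2 1 1 0 1"
definition zL :: z2 where "zL = Z2 1 0 1 1"
definition zN :: z2 where "zN = Z2 (-1) 0 0 (-1)"

lemmas zdefs = zS_def zR_def zT_def zL_def zN_def one_z2_def

lemma zSS: "zS * zS = zN" by (simp add: zdefs)
lemma zRRR: "zR * zR * zR = zN" by (simp add: zdefs)
lemma zNN: "zN * zN = 1" by (simp add: zdefs)
lemma zN_comm: "zN * x = x * zN" by (cases x) (simp add: zdefs)
lemma zSR: "zS * zR = zN * zT" by (simp add: zdefs)
lemma zTR: "zT * zR = zL" by (simp add: zdefs)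
lemma zLR: "zL * zR = zS" by (simp add: zdefs)
lemma zT_eq: "zS * zS * zS * zR = zT" by (simp add: zdefs)
lemma zR2: "zR^2 = Z2 (-1) (-1) 1 0" by (simp add: zdefs power2_eq_square)

definition pos :: "z2 \<Rightarrow> bool" where
  "pos M = (case M of Z2 a b c d \<Rightarrow> 0 \<le> a \<and> 0 \<le> b \<and> 0 \<le> c \<and> 0 \<le> d \<and> a*d - b*c = 1)"

lemma pos_nz:
  fixes a b c d :: int
  assumes "0 \<le> a" "0 \<le> b" "0 \<le> c" "0 \<le> d" "a*d - b*c = 1"
  shows "0 < a + b" "0 < c + d" "0 < a + c" "0 < b + d"
proof -
  have h1: "\<not>(a = 0 \<and> b = 0)" "\<not>(c = 0 \<and> d = 0)" "\<not>(a = 0 \<and> c = 0)" "\<not>(b = 0 \<and> d = 0)"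
    using assms(5) by auto
  show "0 < a + b" using h1(1) assms(1-4) by smt
  show "0 < c + d" using h1(2) assms(1-4) by smt
  show "0 < a + c" using h1(3) assms(1-4) by smt
  show "0 < b + d" using h1(4) assms(1-4) by smt
qed

lemma key_split:
  fixes a b c d :: int
  assumes "0 \<le> a" "0 \<le> b" "0 \<le> c" "0 \<le> d" "a*d - b*c = 1"
  shows "(c \<le> a \<and> d \<le> b) \<or> (a \<le> c \<and> b \<le> d) \<or> (a = 1 \<and> b = 0 \<and> c = 0 \<and> d = 1)"
proof (rule ccontr)
  assume H: "\<not> ?thesis"
  then have "(a < c \<or> b < d) \<and> (c < a \<or> d < b)" by auto
  then consider (i) "a < c" "d < b" | (ii) "b < d" "c < a" | (iii) "a < c" "c < a" | (iv) "b < d" "d < b" by auto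
  then show False
  proof cases
    case i
    have "(a+1)*(d+1) \<le> c*b" using i assms by (intro mult_mono) auto
    then show False using assms by (simp add: algebra_simps)
  next
    case ii
    have "(c+1)*(b+1) \<le> a*d" using ii assms by (intro mult_mono) auto
    then have "b = 0" "c = 0" using assms by (auto simp: algebra_simps)
    then have "a*d = 1" using assms by simp
    then have "a = 1" "d = 1" using assms by (auto simp: zmult_eq_1_iff pos_zmult_eq_1_iff)
    then show False using H \<open>b = 0\<close> \<open>c = 0\<close> by auto
  qed auto
qed

function phip :: "'h::monoid_mult \<Rightarrow> 'h \<Rightarrow> int \<Rightarrow> int \<Rightarrow> int \<Rightarrow> int \<Rightarrow> 'h" where
  "phip A B a b c d = (if 0 \<le> c \<and> 0 \<le> d \<and> c \<le> a \<and> d \<le> b \<and> 0 < c + d then A * phip A B (a-c) (b-d) c d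
     else if 0 \<le> a \<and> 0 \<le> b \<and> a \<le> c \<and> b \<le> d \<and> 0 < a + b then B * phip A B a b (c-a) (d-b) else 1)"
  by pat_completeness auto
termination by (relation "Wellfounded.measure (\<lambda>(A,B,a,b,c,d). nat (a+b+c+d))") auto

declare phip.simps[simp del]

fun ph :: "'h::monoid_mult \<Rightarrow> 'h \<Rightarrow> z2 \<Rightarrow> 'h" where
  "ph A B (Z2 a b c d) = phip A B a b c d"

fun msz :: "z2 \<Rightarrow> nat" where "msz (Z2 a b c d) = nat (a+b+c+d)"

lemma ph_one[simp]: "ph A B 1 = 1"
  by (simp add: one_z2_def phip.simps)

lemma pos_one[simp]: "pos 1" by (simp add: pos_def one_z2_def)

lemma pos_TM: "pos M \<Longrightarrow> pos (zT * M)"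
  by (cases M) (auto simp: pos_def zT_def algebra_simps)

lemma pos_LM: "pos M \<Longrightarrow> pos (zL * M)"
  by (cases M) (auto simp: pos_def zL_def algebra_simps)

lemma ph_TM: assumes "pos M" shows "ph A B (zT * M) = A * ph A B M"
proof (cases M)
  case (Z2 a b c d)
  then have p: "0 \<le> a" "0 \<le> b" "0 \<le> c" "0 \<le> d" "a*d - b*c = 1" using assms by (auto simp: pos_def)
  note nz = pos_nz[OF p]
  show ?thesis using Z2 p nz by (simp add: zT_def phip.simps[of A B "a+c"])
qed

lemma ph_LM: assumes "pos M" shows "ph A B (zL * M) = B * ph A B M"
proof (cases M)
  case (Z2 a b c d)
  then have p: "0 \<le> a" "0 \<le> b" "0 \<le> c" "0 \<le> d" "a*d - b*c = 1" using assms by (auto simp: pos_def)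
  note nz = pos_nz[OF p]
  have "\<not> (c = 0 \<and> d = 0)" using p(5) by auto
  then show ?thesis using Z2 p nz by (auto simp: zL_def phip.simps[of A B a b "a+c"])
qed

lemma pos_left_cases:
  assumes "pos M"
  shows "M = 1 \<or> (\<exists>M'. pos M' \<and> M = zT * M' \<and> msz M' < msz M) \<or> (\<exists>M'. pos M' \<and> M = zL * M' \<and> msz M' < msz M)"
proof (cases M)
  case (Z2 a b c d)
  then have p: "0 \<le> a" "0 \<le> b" "0 \<le> c" "0 \<le> d" "a*d - b*c = 1" using assms by (auto simp: pos_def)
  note nz = pos_nz[OF p]
  consider "c \<le> a \<and> d \<le> b" | "a \<le> c \<and> b \<le> d" | "a = 1 \<and> b = 0 \<and> c = 0 \<and> d = 1"
    using key_split[OF p] by blast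
  then show ?thesis
  proof cases
    case 1
    then have "pos (Z2 (a-c) (b-d) c d) \<and> M = zT * Z2 (a-c) (b-d) c d \<and> msz (Z2 (a-c) (b-d) c d) < msz M"
      using Z2 p nz by (auto simp: pos_def zT_def algebra_simps)
    then show ?thesis by blast
  next
    case 2
    then have "pos (Z2 a b (c-a) (d-b)) \<and> M = zL * Z2 a b (c-a) (d-b) \<and> msz (Z2 a b (c-a) (d-b)) < msz M"
      using Z2 p nz by (auto simp: pos_def zL_def algebra_simps)
    then show ?thesis by blast
  next
    case 3 then show ?thesis using Z2 by (simp add: one_z2_def)
  qed
qed

lemma pos_right_cases:
  assumes "pos M"
  shows "M = 1 \<or> (\<exists>M'. pos M' \<and> M = M' * zT) \<or> (\<exists>M'. pos M' \<and> M = M' * zL)"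
proof (cases M)
  case (Z2 a b c d)
  then have p: "0 \<le> a" "0 \<le> c" "0 \<le> b" "0 \<le> d" "a*d - c*b = 1" using assms by (auto simp: pos_def algebra_simps)
  consider "b \<le> a \<and> d \<le> c" | "a \<le> b \<and> c \<le> d" | "a = 1 \<and> c = 0 \<and> b = 0 \<and> d = 1"
    using key_split[OF p] by blast
  then show ?thesis
  proof cases
    case 1
    then have "pos (Z2 (a-b) b (c-d) d) \<and> M = Z2 (a-b) b (c-d) d * zL"
      using Z2 p by (auto simp: pos_def zL_def algebra_simps)
    then show ?thesis by blast
  next
    case 2
    then have "pos (Z2 a (b-a) c (d-c)) \<and> M = Z2 a (b-a) c (d-c) * zT"
      using Z2 p by (auto simp: pos_def zT_def algebra_simps)
    then show ?thesis by blast
  next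
    case 3 then show ?thesis using Z2 by (simp add: one_z2_def)
  qed
qed

lemma pos_mult: "pos M \<Longrightarrow> pos N \<Longrightarrow> pos (M * N)"
proof -
  assume "pos M" "pos N"
  moreover have "zdet (M*N) = zdet M * zdet N" by (rule zdet_mult)
  ultimately show ?thesis
    by (cases M; cases N) (auto simp: pos_def)
qed

lemma ph_mult: "pos M \<Longrightarrow> pos N \<Longrightarrow> ph A B (M * N) = ph A B M * ph A B N"
proof (induction "msz M" arbitrary: M rule: less_induct)
  case less
  from pos_left_cases[OF less.prems(1)] show ?case
  proof (elim disjE exE conjE)
    assume "M = 1" then show ?thesis by simp
  next
    fix M' assume h: "pos M'" "M = zT * M'" "msz M' < msz M"
    have "ph A B (M * N) = ph A B (zT * (M' * N))" using h by (simp add: mult.assoc)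
    also have "\<dots> = A * ph A B (M' * N)" using h less.prems by (simp add: ph_TM pos_mult)
    also have "\<dots> = A * ph A B M' * ph A B N" using less h by (simp add: mult.assoc)
    also have "\<dots> = ph A B M * ph A B N" using h by (simp add: ph_TM)
    finally show ?thesis .
  next
    fix M' assume h: "pos M'" "M = zL * M'" "msz M' < msz M"
    have "ph A B (M * N) = ph A B (zL * (M' * N))" using h by (simp add: mult.assoc)
    also have "\<dots> = B * ph A B (M' * N)" using h less.prems by (simp add: ph_LM pos_mult)
    also have "\<dots> = B * ph A B M' * ph A B N" using less h by (simp add: mult.assoc)
    also have "\<dots> = ph A B M * ph A B N" using h by (simp add: ph_LM)
    finally show ?thesis .
  qed
qed

lemma pos_zT: "pos zT" and pos_zL: "pos zL" by (simp_all add: pos_def zT_def zL_def)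

lemma ph_zT: "ph A B zT = A"
  using ph_TM[OF pos_one, of A B] by simp
lemma ph_zL: "ph A B zL = B"
  using ph_LM[OF pos_one, of A B] by simp


definition nfz :: "bool \<Rightarrow> nat \<Rightarrow> bool \<Rightarrow> z2 \<Rightarrow> z2" where
  "nfz e b a M = (if e then zN else 1) * zR^b * M * (if a then zS else 1)"

definition isnf :: "z2 \<Rightarrow> bool \<times> nat \<times> bool \<times> z2 \<Rightarrow> bool" where
  "isnf g t = (case t of (e,b,a,M) \<Rightarrow> b < 3 \<and> pos M \<and> nfz e b a M = g)"

lemma b3: "(b::nat) < 3 \<Longrightarrow> b = 0 \<or> b = 1 \<or> b = 2" by auto

fun sgz :: "bool \<Rightarrow> z2 \<Rightarrow> z2" where
  "sgz e (Z2 x y z w) = (if e then Z2 (-x) (-y) (-z) (-w) else Z2 x y z w)"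
fun shz :: "bool \<Rightarrow> z2 \<Rightarrow> z2" where
  "shz a (Z2 x y z w) = (if a then Z2 y (-x) w (-z) else Z2 x y z w)"
fun rbz :: "nat \<Rightarrow> z2 \<Rightarrow> z2" where
  "rbz b (Z2 p q r w) = (if b = 0 then Z2 p q r w else if b = 1 then Z2 (-r) (-w) (p+r) (q+w) else
               Z2 (-p-r) (-q-w) p q)"

lemma zeq_iff: "Z2 a b c d = Z2 a' b' c' d' \<longleftrightarrow> a = a' \<and> b = b' \<and> c = c' \<and> d = d'" by simp

lemma nfz_ex: "b < 3 \<Longrightarrow> nfz e b a M = sgz e (shz a (rbz b M))"
proof -
  assume "b < 3"
  then consider "b = 0" | "b = 1" | "b = 2" using b3 by blast
  then show ?thesis
    by cases (cases M; cases e; cases a; simp add: nfz_def zdefs power2_eq_square)+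
qed

lemma nf_unique:
  assumes "isnf g (e,b,a,M)" "isnf g (e',b',a',M')"
  shows "(e,b,a,M) = (e',b',a',M')"
proof -
  obtain p q r w where M: "M = Z2 p q r w" by (cases M)
  obtain p' q' r' w' where M': "M' = Z2 p' q' r' w'" by (cases M')
  have P: "0 \<le> p" "0 \<le> q" "0 \<le> r" "0 \<le> w" "p*w - q*r = 1" and bb: "b < 3"
    using assms(1) M by (auto simp: isnf_def pos_def)
  have P': "0 \<le> p'" "0 \<le> q'" "0 \<le> r'" "0 \<le> w'" "p'*w' - q'*r' = 1" and bb': "b' < 3"
    using assms(2) M' by (auto simp: isnf_def pos_def)
  note n1 = pos_nz[OF P] and n2 = pos_nz[OF P']
  have eq: "sgz e (shz a (rbz b (Z2 p q r w))) = sgz e' (shz a' (rbz b' (Z2 p' q' r' w')))"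
    using assms M M' bb bb' by (simp add: isnf_def nfz_ex)
  show ?thesis
    using b3[OF bb] b3[OF bb'] eq n1 n2 P P' M M'
    apply (elim disjE; cases e; cases e'; cases a; cases a')
    apply (simp_all add: zeq_iff)

    done
qed


lemma zN_c: "A * zN = zN * A" by (rule zN_comm[symmetric])

lemma sgn_flip: "(if e then zN else 1) * zN = (if \<not> e then zN else 1)"
  by (simp add: zNN)

lemma pull_zN: "E * R * M * zN = (E * zN) * R * M"
  by (metis mult.assoc zN_comm)

lemma nf_stepS:
  assumes "isnf g (e,b,a,M)"
  shows "isnf (g * zS) (if a then (\<not>e,b,False,M) else (e,b,True,M))"
proof -
  have g: "g = nfz e b a M" and bb: "b < 3" and p: "pos M" using assms by (auto simp: isnf_def)
  show ?thesis
  proof (cases a)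
    case True
    have "g * zS = (if e then zN else 1) * zR^b * M * (zS * zS)"
      using g True by (simp add: nfz_def mult.assoc)
    also have "\<dots> = ((if e then zN else 1) * zN) * zR^b * M"
      by (simp only: zSS pull_zN)
    also have "\<dots> = nfz (\<not>e) b False M" by (simp only: sgn_flip nfz_def) simp
    finally show ?thesis using True bb p by (simp add: isnf_def)
  next
    case False
    then show ?thesis using g bb p by (simp add: isnf_def nfz_def)
  qed
qed

lemma nf_stepR:
  assumes "isnf g (e,b,a,M)"
  shows "\<exists>t. isnf (g * zR) t"
proof -
  have g: "g = nfz e b a M" and bb: "b < 3" and p: "pos M" using assms by (auto simp: isnf_def)
  let ?E = "(if e then zN else 1)"
  show ?thesis
  proof (cases a)
    case True
    have "g * zR = ?E * zR^b * M * (zS * zR)"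
      using g True by (simp add: nfz_def mult.assoc)
    also have "\<dots> = ?E * zR^b * (M * zT) * zN"
      by (metis zSR mult.assoc zN_c)
    also have "\<dots> = (?E * zN) * zR^b * (M * zT)"
      by (simp only: pull_zN)
    also have "\<dots> = nfz (\<not>e) b False (M * zT)" by (simp only: sgn_flip nfz_def) simp
    finally have "isnf (g * zR) (\<not>e, b, False, M * zT)"
      using bb p by (simp add: isnf_def pos_mult pos_zT)
    then show ?thesis by blast
  next
    case False
    from pos_right_cases[OF p] show ?thesis
    proof (elim disjE exE conjE)
      assume M: "M = 1"
      show ?thesis
      proof (cases "b = 2")
        case True
        have "g * zR = ?E * (zR * zR * zR)"
          using g False M True by (simp add: nfz_def mult.assoc power2_eq_square)
        also have "\<dots> = nfz (\<not>e) 0 False 1" by (simp add: zRRR sgn_flip nfz_def)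
        finally have "isnf (g * zR) (\<not>e, 0, False, 1)" by (simp add: isnf_def)
        then show ?thesis by blast
      next
        case b2: False
        have "g * zR = nfz e (Suc b) False 1"
          using g False M by (simp add: nfz_def mult.assoc power_commutes)
        then have "isnf (g * zR) (e, Suc b, False, 1)"
          using b2 bb by (simp add: isnf_def)
        then show ?thesis by blast
      qed
    next
      fix M' assume h: "pos M'" "M = M' * zT"
      have "g * zR = nfz e b False (M' * zL)"
        using g False h by (simp add: nfz_def mult.assoc zTR)
      then have "isnf (g * zR) (e, b, False, M' * zL)"
        using bb h by (simp add: isnf_def pos_mult pos_zL)
      then show ?thesis by blast
    next
      fix M' assume h: "pos M'" "M = M' * zL"
      have "g * zR = nfz e b True M'"
        using g False h by (simp add: nfz_def mult.assoc zLR)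
      then have "isnf (g * zR) (e, b, True, M')"
        using bb h by (simp add: isnf_def)
      then show ?thesis by blast
    qed
  qed
qed


definition gen :: "bool \<Rightarrow> z2" where "gen s = (if s then zS else zR)"
definition wz :: "z2 \<Rightarrow> bool list \<Rightarrow> z2" where "wz g ws = foldl (\<lambda>M s. M * gen s) g ws"

lemma wz_append: "wz g (ws @ [s]) = wz g ws * gen s" by (simp add: wz_def)

lemma wz_mult: "wz g ws = g * wz 1 ws"
proof (induction ws rule: rev_induct)
  case Nil then show ?case by (simp add: wz_def)
next
  case (snoc x xs) then show ?case by (simp add: wz_append mult.assoc)
qed

lemma nf_exists_wz: "\<exists>t. isnf g t \<Longrightarrow> \<exists>t. isnf (wz g ws) t"
proof (induction ws rule: rev_induct)
  case Nil then show ?case by (simp add: wz_def)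
next
  case (snoc s ws)
  then obtain e b a M where h: "isnf (wz g ws) (e,b,a,M)" by (metis prod_cases4)
  show ?case
  proof (cases s)
    case True
    have "isnf (wz g (ws @ [s])) (if a then (\<not>e,b,False,M) else (e,b,True,M))"
      using nf_stepS[OF h] True by (simp add: wz_append gen_def)
    then show ?thesis by (rule exI)
  next
    case False
    then show ?thesis using nf_stepR[OF h] by (auto simp: wz_append gen_def)
  qed
qed

definition W :: "z2 \<Rightarrow> bool" where "W g = (\<exists>ws. g = wz 1 ws)"

lemma W_gen: "W g \<Longrightarrow> W (g * gen s)"
  unfolding W_def by (metis wz_append)
lemma W_S: "W g \<Longrightarrow> W (g * zS)" using W_gen[of g True] by (simp add: gen_def)
lemma W_R: "W g \<Longrightarrow> W (g * zR)" using W_gen[of g False] by (simp add: gen_def)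
lemma W_one: "W 1" unfolding W_def wz_def by (rule exI[of _ "[]"]) simp

definition tp :: "int \<Rightarrow> z2" where "tp k = Z2 1 k 0 1"

lemma W_T: "W g \<Longrightarrow> W (g * zT)"
proof -
  assume "W g"
  then have "W (g * zS * zS * zS * zR)" by (intro W_S W_R)
  moreover have "g * zS * zS * zS * zR = g * zT" by (simp only: mult.assoc zT_eq[symmetric])
  ultimately show ?thesis by simp
qed

lemma W_Ti: "W g \<Longrightarrow> W (g * tp (-1))"
proof -
  assume "W g"
  then have "W (g * zR * zR * zR * zR * zR * zS)" by (intro W_S W_R)
  moreover have "zR * zR * zR * zR * zR * zS = tp (-1)" by (simp add: zdefs tp_def)
  ultimately show ?thesis by (simp only: mult.assoc)
qed

lemma W_tp_nat: "W g \<Longrightarrow> W (g * tp (int n)) \<and> W (g * tp (- int n))"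
proof (induction n)
  case 0
  have "tp 0 = 1" by (simp add: tp_def one_z2_def)
  then show ?case using 0 by simp
next
  case (Suc n)
  have e1: "g * tp (int (Suc n)) = (g * tp (int n)) * zT" by (simp add: tp_def zT_def mult.assoc)
  have e2: "g * tp (- int (Suc n)) = (g * tp (- int n)) * tp (-1)" by (simp add: tp_def mult.assoc)
  show ?case using Suc W_T W_Ti unfolding e1 e2 by blast
qed

lemma W_tp: "W g \<Longrightarrow> W (g * tp k)"
proof -
  assume w: "W g"
  show ?thesis
  proof (cases "k \<ge> 0")
    case True
    then have "k = int (nat k)" by simp
    then show ?thesis using W_tp_nat[OF w, of "nat k"] by simp
  next
    case False
    then have "k = - int (nat (-k))" by simp
    then show ?thesis using W_tp_nat[OF w, of "nat (-k)"] by simp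
  qed
qed

lemma zN_W: "W zN"
proof -
  have "W (1 * zS * zS)" by (intro W_S W_one)
  then show ?thesis by (simp add: zSS)
qed


lemma all_W: "zdet g = 1 \<Longrightarrow> W g"
proof (induction "nat \<bar>case g of Z2 a b c d \<Rightarrow> c\<bar>" arbitrary: g rule: less_induct)
  case less
  obtain a b c d where g: "g = Z2 a b c d" by (cases g)
  have det: "a*d - b*c = 1" using less.prems g by simp
  show ?case
  proof (cases "c = 0")
    case True
    then have "a*d = 1" using det by simp
    then have "(a = 1 \<and> d = 1) \<or> (a = -1 \<and> d = -1)" by (simp add: zmult_eq_1_iff)
    then show ?thesis
    proof
      assume "a = 1 \<and> d = 1"
      then have "g = 1 * tp b" using g True by (simp add: tp_def one_z2_def)
      then show ?thesis using W_tp[OF W_one] by simp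
    next
      assume "a = -1 \<and> d = -1"
      then have "g = zN * tp (-b)" using g True by (simp add: tp_def zN_def)
      then show ?thesis using W_tp[OF zN_W] by simp
    qed
  next
    case False
    define k where "k = - (d div c)"
    define g' where "g' = g * tp k * zS"
    have "d mod c = d - c * (d div c)" by (simp add: minus_mult_div_eq_mod)
    then have g'e: "g' = Z2 (a*k + b) (-a) (d mod c) (-c)"
      using g by (simp add: g'_def tp_def zS_def k_def algebra_simps)
    have "zdet g' = 1" unfolding g'_def using less.prems
      by (simp add: zdet_mult tp_def zS_def)
    moreover have "nat \<bar>d mod c\<bar> < nat \<bar>c\<bar>"
      using False by (simp add: abs_mod_less)
    ultimately have "W g'" using less.hyps g g'e by simp
    then have "W (g' * zS * zS * zS * tp (-k))" by (intro W_S W_tp)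
    moreover have "g' * zS * zS * zS * tp (-k) = g"
    proof -
      have "g' * zS * zS * zS * tp (-k) = g * (tp k * (zS * zS * zS * zS) * tp (-k))"
        by (simp add: g'_def mult.assoc)
      also have "tp k * (zS * zS * zS * zS) * tp (-k) = 1"
        by (simp add: tp_def zdefs)
      finally show ?thesis by simp
    qed
    ultimately show ?thesis by simp
  qed
qed

lemma nf_exists: "zdet g = 1 \<Longrightarrow> \<exists>t. isnf g t"
proof -
  assume "zdet g = 1"
  then obtain ws where "g = wz 1 ws" using all_W W_def by blast
  moreover have "\<exists>t. isnf 1 t" by (rule exI[of _ "(False, 0, False, 1)"]) (simp add: isnf_def nfz_def)
  ultimately show ?thesis using nf_exists_wz by blast
qed


lemma nfR_a:
  assumes "isnf g (e,b,True,M)" shows "isnf (g * zR) (\<not>e, b, False, M * zT)"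
proof -
  have g: "g = nfz e b True M" and bb: "b < 3" and p: "pos M" using assms by (auto simp: isnf_def)
  let ?E = "(if e then zN else 1)"
  have "g * zR = ?E * zR^b * M * (zS * zR)"
    using g by (simp add: nfz_def mult.assoc)
  also have "\<dots> = ?E * zR^b * (M * zT) * zN"
    by (metis zSR mult.assoc zN_c)
  also have "\<dots> = (?E * zN) * zR^b * (M * zT)"
    by (simp only: pull_zN)
  also have "\<dots> = nfz (\<not>e) b False (M * zT)" by (simp only: sgn_flip nfz_def) simp
  finally show ?thesis using bb p by (simp add: isnf_def pos_mult pos_zT)
qed

lemma nfR_1a:
  assumes "isnf g (e,2,False,1)" shows "isnf (g * zR) (\<not>e, 0, False, 1)"
proof -
  have g: "g = nfz e 2 False 1" using assms by (auto simp: isnf_def)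
  have "g * zR = (if e then zN else 1) * (zR * zR * zR)"
    using g by (simp add: nfz_def mult.assoc power2_eq_square)
  also have "\<dots> = nfz (\<not>e) 0 False 1" by (simp add: zRRR sgn_flip nfz_def)
  finally show ?thesis by (simp add: isnf_def)
qed

lemma nfR_1b:
  assumes "isnf g (e,b,False,1)" "b \<noteq> 2" shows "isnf (g * zR) (e, Suc b, False, 1)"
proof -
  have g: "g = nfz e b False 1" and bb: "b < 3" using assms by (auto simp: isnf_def)
  have "g * zR = nfz e (Suc b) False 1"
    using g by (simp add: nfz_def mult.assoc power_commutes)
  then show ?thesis using assms(2) bb by (simp add: isnf_def)
qed

lemma nfR_T:
  assumes "isnf g (e,b,False,M' * zT)" "pos M'" shows "isnf (g * zR) (e, b, False, M' * zL)"
proof -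
  have g: "g = nfz e b False (M' * zT)" and bb: "b < 3" using assms by (auto simp: isnf_def)
  have "g * zR = nfz e b False (M' * zL)"
    using g by (simp add: nfz_def mult.assoc zTR)
  then show ?thesis using bb assms(2) by (simp add: isnf_def pos_mult pos_zL)
qed

lemma nfR_L:
  assumes "isnf g (e,b,False,M' * zL)" "pos M'" shows "isnf (g * zR) (e, b, True, M')"
proof -
  have g: "g = nfz e b False (M' * zL)" and bb: "b < 3" using assms by (auto simp: isnf_def)
  have "g * zR = nfz e b True M'"
    using g by (simp add: nfz_def mult.assoc zLR)
  then show ?thesis using bb assms(2) by (simp add: isnf_def)
qed

definition comm :: "'h::monoid_mult \<Rightarrow> 'h \<Rightarrow> bool" where "comm c z = (c * z = z * c)"

lemma comm_mult: "comm c z \<Longrightarrow> comm c w \<Longrightarrow> comm c (z * w)"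
  unfolding comm_def by (metis mult.assoc)
lemma comm_one: "comm c 1" by (simp add: comm_def)
lemma comm_pow: "comm c z \<Longrightarrow> comm c (z^n)"
  by (induction n) (simp_all add: comm_one comm_mult)

lemma comm_phip: "comm c A \<Longrightarrow> comm c B \<Longrightarrow> comm c (phip A B a b x y)"
proof (induction A B a b x y rule: phip.induct)
  case (1 A B a b c d)
  show ?case
    by (subst phip.simps) (auto intro!: comm_mult comm_one 1)
qed

lemma comm_ph: "comm c A \<Longrightarrow> comm c B \<Longrightarrow> comm c (ph A B M)"
  by (cases M) (simp add: comm_phip)



locale presH =
  fixes X Y :: "'h::monoid_mult"
  assumes X4: "X^4 = 1" and Y3: "Y^3 = X^2"
begin

definition hT where "hT = X^3 * Y"
definition hL where "hL = X^3 * Y^2"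
definition nfh :: "bool \<Rightarrow> nat \<Rightarrow> bool \<Rightarrow> z2 \<Rightarrow> 'h" where
  "nfh e b a M = (if e then X^2 else 1) * Y^b * ph hT hL M * (if a then X else 1)"
definition phi :: "z2 \<Rightarrow> 'h" where
  "phi g = (case (THE t. isnf g t) of (e,b,a,M) \<Rightarrow> nfh e b a M)"

lemma phi_eq: "isnf g (e,b,a,M) \<Longrightarrow> phi g = nfh e b a M"
proof -
  assume h: "isnf g (e,b,a,M)"
  have "(THE t. isnf g t) = (e,b,a,M)"
  proof (rule the_equality)
    fix t assume "isnf g t"
    then show "t = (e,b,a,M)" using nf_unique h by (metis prod_cases4)
  qed (rule h)
  then show ?thesis by (simp add: phi_def)
qed

lemma cX: "comm (X^2) X" unfolding comm_def by (rule power_commutes)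
lemma cY: "comm (X^2) Y" unfolding comm_def Y3[symmetric] by (rule power_commutes)
lemma cT: "comm (X^2) hT" unfolding hT_def by (intro comm_mult comm_pow cX cY)
lemma cL: "comm (X^2) hL" unfolding hL_def by (intro comm_mult comm_pow cX cY)
lemma cP: "comm (X^2) (ph hT hL M)" by (intro comm_ph cT cL)
lemma cYb: "comm (X^2) (Y^b)" by (intro comm_pow cY)

lemma X22: "X^2 * X^2 = 1" using X4 by (simp add: power_add[symmetric])

lemma E_flip: "(if e then X^2 else 1) * X^2 = (if \<not>e then X^2 else 1)"
  by (simp add: X22 X4)

lemma move_X2: "E * Q * P * X^2 = (E * X^2) * Q * P" if "comm (X^2) Q" "comm (X^2) P"
proof -
  have "E * Q * P * X^2 = E * (Q * (P * X^2))" by (simp add: mult.assoc)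
  also have "\<dots> = E * (Q * (X^2 * P))" using that(2) by (simp add: comm_def)
  also have "\<dots> = E * ((Q * X^2) * P)" by (simp add: mult.assoc)
  also have "\<dots> = E * ((X^2 * Q) * P)" using that(1) by (simp add: comm_def)
  finally show ?thesis by (simp add: mult.assoc)
qed

end

context presH begin
lemma phi_S: assumes "zdet g = 1" shows "phi (g * zS) = phi g * X"
proof -
  obtain e b a M where h: "isnf g (e,b,a,M)" using nf_exists[OF assms] by (metis prod_cases4)
  have s: "isnf (g * zS) (if a then (\<not>e,b,False,M) else (e,b,True,M))" by (rule nf_stepS[OF h])
  show ?thesis
  proof (cases a)
    case False
    then show ?thesis using s phi_eq h by (simp add: nfh_def)
  next
    case True
    have "phi g * X = (if e then X^2 else 1) * Y^b * ph hT hL M * X^2"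
      using phi_eq[OF h] True by (simp add: nfh_def mult.assoc power2_eq_square)
    also have "\<dots> = ((if e then X^2 else 1) * X^2) * Y^b * ph hT hL M"
      by (rule move_X2[OF cYb cP])
    also have "\<dots> = phi (g * zS)"
      using phi_eq[OF s[simplified True if_True]] by (simp only: E_flip nfh_def) simp
    finally show ?thesis by simp
  qed
qed

end

context presH begin
lemma XhT: "X^2 * hT = X * Y"
proof -
  have "X^2 * hT = X^(4+1) * Y" by (simp add: hT_def mult.assoc[symmetric] power_add[symmetric])
  also have "\<dots> = X * Y" by (simp only: power_add X4) simp
  finally show ?thesis .
qed

lemma hTY: "hT * Y = hL" by (simp add: hT_def hL_def mult.assoc power2_eq_square)
lemma hLY: "hL * Y = X"
proof -
  have "hL * Y = X^3 * Y^(2+1)" by (simp only: hL_def mult.assoc power_add) simp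
  also have "\<dots> = X^(4+1)" by (simp add: Y3 power_add[symmetric])
  also have "\<dots> = X" by (simp only: power_add X4) simp
  finally show ?thesis .
qed

lemma phi_R: assumes "zdet g = 1" shows "phi (g * zR) = phi g * Y"
proof -
  obtain e b a M where h: "isnf g (e,b,a,M)" using nf_exists[OF assms] by (metis prod_cases4)
  have p: "pos M" and bb: "b < 3" using h by (auto simp: isnf_def)
  let ?E = "(if e then X^2 else 1)"
  show ?thesis
  proof (cases a)
    case True
    have s: "isnf (g * zR) (\<not>e, b, False, M * zT)" using nfR_a h True by simp
    have "phi g * Y = ?E * Y^b * ph hT hL M * (X * Y)"
      using phi_eq[OF h] True by (simp add: nfh_def mult.assoc)
    also have "\<dots> = ?E * Y^b * ph hT hL M * X^2 * hT"
      by (simp add: XhT mult.assoc)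
    also have "\<dots> = (?E * X^2) * Y^b * ph hT hL M * hT"
      by (simp only: move_X2[OF cYb cP])
    also have "\<dots> = phi (g * zR)"
      using phi_eq[OF s] by (simp only: E_flip nfh_def ph_mult[OF p pos_zT] ph_zT) (simp add: mult.assoc)
    finally show ?thesis by simp
  next
    case False
    from pos_right_cases[OF p] show ?thesis
    proof (elim disjE exE conjE)
      assume M: "M = 1"
      show ?thesis
      proof (cases "b = 2")
        case True
        have s: "isnf (g * zR) (\<not>e, 0, False, 1)" using nfR_1a h False M True by simp
        have "phi g * Y = ?E * Y^3" using phi_eq[OF h] False M True
          by (simp add: nfh_def mult.assoc power_Suc2[symmetric])
        also have "\<dots> = phi (g * zR)" using phi_eq[OF s] by (simp add: Y3 nfh_def E_flip)
        finally show ?thesis by simp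
      next
        case b2: False
        have s: "isnf (g * zR) (e, Suc b, False, 1)" using nfR_1b h False M b2 by simp
        show ?thesis using phi_eq[OF s] phi_eq[OF h] False M
          by (simp add: nfh_def mult.assoc power_commutes)
      qed
    next
      fix M' assume hM: "pos M'" "M = M' * zT"
      have s: "isnf (g * zR) (e, b, False, M' * zL)" using nfR_T h False hM by simp
      show ?thesis using phi_eq[OF s] phi_eq[OF h] False hM
        by (simp add: nfh_def mult.assoc ph_mult pos_zT pos_zL ph_zT ph_zL hTY[symmetric])
    next
      fix M' assume hM: "pos M'" "M = M' * zL"
      have s: "isnf (g * zR) (e, b, True, M')" using nfR_L h False hM by simp
      show ?thesis using phi_eq[OF s] phi_eq[OF h] False hM
        by (simp add: nfh_def mult.assoc ph_mult pos_zL ph_zL hLY)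
    qed
  qed
qed

end

context presH begin
lemma phi_one: "phi 1 = 1"
proof -
  have "isnf 1 (False, 0, False, 1)" by (simp add: isnf_def nfz_def)
  then show ?thesis by (simp add: phi_eq nfh_def)
qed

lemma zdet_gen: "zdet (gen s) = 1" by (simp add: gen_def zdefs)

lemma zdet_wz: "zdet (wz g ws) = zdet g"
proof (induction ws rule: rev_induct)
  case Nil then show ?case by (simp add: wz_def)
next
  case (snoc x xs) then show ?case by (simp add: wz_append zdet_mult zdet_gen)
qed

definition genh :: "bool \<Rightarrow> 'h" where "genh s = (if s then X else Y)"

lemma phi_wz: "zdet g = 1 \<Longrightarrow> phi (wz g ws) = phi g * foldl (\<lambda>M s. M * genh s) 1 ws"
proof (induction ws rule: rev_induct)
  case Nil then show ?case by (simp add: wz_def)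
next
  case (snoc s ws)
  have d: "zdet (wz g ws) = 1" using snoc.prems by (simp add: zdet_wz)
  show ?case
    using snoc phi_S[OF d] phi_R[OF d]
    by (cases s) (simp_all add: wz_append gen_def genh_def mult.assoc)
qed

lemma phi_mult: "zdet g = 1 \<Longrightarrow> zdet h = 1 \<Longrightarrow> phi (g * h) = phi g * phi h"
proof -
  assume g: "zdet g = 1" and h: "zdet h = 1"
  obtain ws where ws: "h = wz 1 ws" using all_W[OF h] W_def by blast
  have "phi (g * h) = phi (wz g ws)" using ws by (simp only: wz_mult[of g ws])
  also have "\<dots> = phi g * foldl (\<lambda>M s. M * genh s) 1 ws" by (rule phi_wz[OF g])
  also have "foldl (\<lambda>M s. M * genh s) 1 ws = phi h"
    using phi_wz[of 1 ws] ws by (simp add: phi_one)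
  finally show ?thesis .
qed

lemma phi_zS: "phi zS = X" using phi_S[of 1] by (simp add: phi_one)
lemma phi_zR: "phi zR = Y" using phi_R[of 1] by (simp add: phi_one)

end


datatype m2 = M2 real real real real

instantiation m2 :: monoid_mult
begin
definition one_m2 :: m2 where "one_m2 = M2 1 0 0 1"
fun times_m2 :: "m2 \<Rightarrow> m2 \<Rightarrow> m2" where
  "times_m2 (M2 a b c d) (M2 e f g h) = M2 (a*e+b*g) (a*f+b*h) (c*e+d*g) (c*f+d*h)"
instance
proof
  fix x y z :: m2
  show "x * y * z = x * (y * z)"
    by (cases x; cases y; cases z) (simp add: algebra_simps)
  show "1 * x = x" by (cases x) (simp add: one_m2_def)
  show "x * 1 = x" by (cases x) (simp add: one_m2_def)
qed
end

fun mtr :: "m2 \<Rightarrow> real" where "mtr (M2 a b c d) = a + d"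
fun mdet :: "m2 \<Rightarrow> real" where "mdet (M2 a b c d) = a*d - b*c"

lemma mdet_mult: "mdet (x * y) = mdet x * mdet y"
  by (cases x; cases y) (simp add: algebra_simps)

lemma mtr_rec: "mtr (A * (B * B)) = mtr B * mtr (A * B) - mdet B * mtr A"
  by (cases A; cases B) (simp add: algebra_simps)

definition cub :: "real \<Rightarrow> real" where "cub x = x^3 + x^2 - 2*x - 1"

lemma lam_ex: "\<exists>x. -2 \<le> x \<and> x \<le> -7/4 \<and> cub x = 0"
proof -
  have "\<exists>x\<ge>-2. x \<le> -7/4 \<and> cub x = 0"
    by (rule IVT) (auto simp: cub_def power3_eq_cube power2_eq_square intro!: continuous_intros)
  then show ?thesis by blast
qed

definition lam :: real where "lam = (SOME x. -2 \<le> x \<and> x \<le> -7/4 \<and> cub x = 0)"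

lemma lam: "-2 \<le> lam" "lam \<le> -7/4" "lam^3 + lam^2 - 2*lam - 1 = 0"
proof -
  have "-2 \<le> lam \<and> lam \<le> -7/4 \<and> cub lam = 0" unfolding lam_def by (rule someI_ex[OF lam_ex])
  then show "-2 \<le> lam" "lam \<le> -7/4" "lam^3 + lam^2 - 2*lam - 1 = 0" by (auto simp: cub_def)
qed

lemma lam_sq: "lam^2 \<ge> 49/16"
proof -
  have "(7/4)^2 \<le> (-lam)^2" using lam(2) by (intro power_mono) auto
  then show ?thesis by (simp add: power2_eq_square)
qed

definition mu :: real where "mu = sqrt (lam^2 - 3)"

lemma mu_sq: "mu^2 = lam^2 - 3"
  unfolding mu_def using lam_sq by simp

definition X :: m2 where "X = M2 0 (-1) 1 0"
definition Y :: m2 where "Y = M2 ((1+mu)/2) (-lam/2) (lam/2) ((1-mu)/2)"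

lemma X4: "X^4 = 1" by (simp add: X_def one_m2_def eval_nat_numeral)

lemma YY: "Y * Y = M2 ((mu - 1)/2) (-lam/2) (lam/2) (-(1+mu)/2)"
proof -
  have e1: "(1 + mu) / 2 * ((1 + mu) / 2) + - lam / 2 * (lam / 2) = (mu - 1)/2"
    using mu_sq by (simp add: field_simps power2_eq_square)
  have e2: "lam / 2 * (- lam / 2) + (1 - mu) / 2 * ((1 - mu) / 2) = -(1+mu)/2"
    using mu_sq by (simp add: field_simps power2_eq_square)
  show ?thesis unfolding Y_def using e1 e2 by (simp add: field_simps)
qed


lemma mm: "mu * mu = lam*lam - 3" "mu * (mu * z) = (lam*lam - 3) * z"
  using mu_sq by (simp_all add: power2_eq_square mult.assoc[symmetric])

lemma Y3: "Y^3 = X^2"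
proof -
  have "Y^3 = (Y*Y)*Y" by (simp add: power3_eq_cube)
  also have "\<dots> = M2 (-1) 0 0 (-1)"
    unfolding YY Y_def by (simp add: field_simps mm algebra_simps power2_eq_square)
  also have "\<dots> = X^2" by (simp add: X_def power2_eq_square)
  finally show ?thesis .
qed

definition bb :: real where "bb = (1-mu)/2"
definition cc :: real where "cc = -(1+mu)/2"

definition Tp :: "real \<Rightarrow> real \<Rightarrow> m2" where
  "Tp p q = M2 p (q*bb) (q*cc) p"

lemma bc: "bb * cc = (lam^2 - 4)/4"
  unfolding bb_def cc_def by (simp add: field_simps mm algebra_simps power2_eq_square)

lemma Tp_mult: "Tp p q * Tp p' q' = Tp (p*p' + q*q'*((lam^2-4)/4)) (p*q' + q*p')"
proof -
  have e: "q * bb * (q' * cc) = q*q'*((lam^2-4)/4)" "q * cc * (q' * bb) = q*q'*((lam^2-4)/4)"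
    by (simp_all only: bc[symmetric] ac_simps)
  show ?thesis unfolding Tp_def times_m2.simps e by (simp add: algebra_simps)
qed

definition T :: m2 where "T = X^3 * Y"

lemma T_Tp: "T = Tp (lam/2) 1"
  by (simp add: T_def X_def Y_def Tp_def bb_def cc_def eval_nat_numeral field_simps)

fun pq :: "nat \<Rightarrow> real \<times> real" where
  "pq 0 = (1, 0)"
| "pq (Suc n) = (fst (pq n) * (lam/2) + snd (pq n) * ((lam^2-4)/4), fst (pq n) + snd (pq n) * (lam/2))"

lemma T_pow: "T^n = Tp (fst (pq n)) (snd (pq n))"
proof (induction n)
  case 0 then show ?case by (simp add: Tp_def one_m2_def)
next
  case (Suc n)
  have "T^Suc n = T^n * T" by (rule power_Suc2)
  also have "\<dots> = Tp (fst (pq n)) (snd (pq n)) * Tp (lam/2) 1"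
    by (simp only: Suc.IH T_Tp[symmetric])
  also have "\<dots> = Tp (fst (pq (Suc n))) (snd (pq (Suc n)))"
    unfolding Tp_mult by (simp add: algebra_simps)
  finally show ?case .
qed


type_synonym tri = "real \<times> real \<times> real"

fun ev3 :: "tri \<Rightarrow> real" where "ev3 (a,b,c) = a + b*lam + c*(lam*lam)"
fun ml :: "tri \<Rightarrow> tri" where "ml (a,b,c) = (c, a + 2*c, b - c)"
fun ad3 :: "tri \<Rightarrow> tri \<Rightarrow> tri" where "ad3 (a,b,c) (a',b',c') = (a+a', b+b', c+c')"
fun sc3 :: "real \<Rightarrow> tri \<Rightarrow> tri" where "sc3 k (a,b,c) = (k*a, k*b, k*c)"

lemma lam3: "lam * (lam * lam) = 1 + 2*lam - lam*lam"
  using lam(3) by (simp add: power3_eq_cube power2_eq_square algebra_simps)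

lemma ev3_ml: "ev3 (ml v) = lam * ev3 v"
proof (cases v)
  case (fields a b c)
  have "lam * ev3 v = a*lam + b*(lam*lam) + c*(lam*(lam*lam))" using fields by (simp add: algebra_simps)
  also have "\<dots> = ev3 (ml v)" using fields by (simp add: lam3 algebra_simps)
  finally show ?thesis by simp
qed

lemma ev3_ad: "ev3 (ad3 v w) = ev3 v + ev3 w"
  by (cases v; cases w) (simp add: algebra_simps)
lemma ev3_sc: "ev3 (sc3 k v) = k * ev3 v"
  by (cases v) (simp add: algebra_simps)

fun pt :: "nat \<Rightarrow> tri \<times> tri" where
  "pt 0 = ((1,0,0), (0,0,0))"
| "pt (Suc n) = (case pt n of (P, Q) \<Rightarrow>
      (ad3 (sc3 (1/2) (ml P)) (ad3 (sc3 (1/4) (ml (ml Q))) (sc3 (-1) Q)), ad3 P (sc3 (1/2) (ml Q))))"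

lemma pq_pt: "pq n = (ev3 (fst (pt n)), ev3 (snd (pt n)))"
proof (induction n)
  case 0 then show ?case by simp
next
  case (Suc n)
  obtain P Q where e: "pt n = (P, Q)" by (cases "pt n")
  show ?case using Suc e
    by (simp add: ev3_ad ev3_sc ev3_ml power2_eq_square algebra_simps) (simp add: field_simps)
qed

lemma pt7: "pt 7 = ((1,0,0), (0,0,0))"
  by (simp add: eval_nat_numeral)

lemma T7: "T^7 = 1"
  by (simp add: T_pow pq_pt pt7 Tp_def one_m2_def)


definition h0 :: m2 where "h0 = X * Y * X * Y * Y"

lemma mdet_X: "mdet X = 1" by (simp add: X_def)
lemma mdet_Y: "mdet Y = 1"
  by (simp add: Y_def field_simps mm algebra_simps power2_eq_square)

lemma mdet_h0: "mdet h0 = 1" by (simp add: h0_def mdet_mult mdet_X mdet_Y)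

lemma mtr_h0: "mtr h0 = lam^2 - 1"
proof -
  have "mtr h0 = mtr (X * Y * X * (Y * Y))" by (simp only: h0_def mult.assoc)
  also have "\<dots> = lam^2 - 1"
    by (simp add: YY X_def Y_def field_simps mm algebra_simps power2_eq_square)
  finally show ?thesis .
qed

lemma tau_gt: "mtr h0 > 2" using lam_sq mtr_h0 by simp

lemma tr_rec: "mtr (h0^(Suc (Suc n))) = mtr h0 * mtr (h0^Suc n) - mtr (h0^n)"
proof -
  have e: "h0^(Suc (Suc n)) = h0^n * (h0 * h0)" by (simp only: power_Suc2 mult.assoc)
  have e2: "h0^n * h0 = h0^(Suc n)" by (simp only: power_Suc2)
  have "mtr (h0^(Suc (Suc n))) = mtr (h0^n * (h0*h0))" by (simp only: e)
  also have "\<dots> = mtr h0 * mtr (h0^n * h0) - mdet h0 * mtr (h0^n)" by (rule mtr_rec)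
  also have "\<dots> = mtr h0 * mtr (h0^Suc n) - mtr (h0^n)" by (simp only: e2 mdet_h0 mult_1)
  finally show ?thesis .
qed

lemma tr_mono: "mtr (h0^n) < mtr (h0^Suc n) \<and> 0 < mtr (h0^n)"
proof (induction n)
  case 0
  have "mtr (h0^0) = 2" by (simp add: one_m2_def)
  moreover have "mtr (h0^Suc 0) = mtr h0" by simp
  ultimately show ?case using tau_gt by simp
next
  case (Suc n)
  define t where "t = mtr h0"
  define a where "a = mtr (h0^n)"
  define b where "b = mtr (h0^Suc n)"
  define c where "c = mtr (h0^Suc (Suc n))"
  have ab: "a < b" "0 < a" using Suc by (simp_all add: a_def b_def)
  have t2: "t > 2" using tau_gt by (simp add: t_def)
  have c: "c = t * b - a" using tr_rec[of n] by (simp add: a_def b_def c_def t_def)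
  have "0 < (t - 2) * b" using ab t2 by (intro mult_pos_pos) auto
  moreover have "(t - 2) * b = t * b - 2 * b" by (simp add: algebra_simps)
  ultimately have "b < c \<and> 0 < b" using ab c by linarith
  then show ?case by (simp add: b_def c_def)
qed

lemma h0_pow_inj: "h0^m = h0^n \<Longrightarrow> m = n"
proof -
  assume e: "h0^m = h0^n"
  have "strict_mono (\<lambda>n. mtr (h0^n))" by (rule strict_monoI_Suc) (use tr_mono in auto)
  then show "m = n" using e by (metis strict_mono_eq)
qed


interpretation P: presH X Y
  by unfold_locales (rule X4, rule Y3)

definition Phi :: "sl2z \<Rightarrow> m2" where "Phi g = P.phi (toz g)"

lemma Phi_plus: "Phi (g + h) = Phi g * Phi h"
  unfolding Phi_def toz_plus by (rule P.phi_mult[OF toz_det toz_det])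

lemma Phi_zero: "Phi 0 = 1"
  unfolding Phi_def toz_zero by (rule P.phi_one)

lemma zdet_S: "zdet zS = 1" and zdet_R: "zdet zR = 1" by (simp_all add: zdefs)

lemma Phi_u: "Phi u = T"
proof -
  have "toz u = zT" by (simp add: toz_u zT_def)
  also have "zT = 1 * zS * zS * zS * zR" using zT_eq by simp
  finally have "Phi u = P.phi (1 * zS * zS * zS * zR)" by (simp add: Phi_def)
  also have "\<dots> = X * X * X * Y"
    by (simp add: P.phi_S P.phi_R P.phi_one zdet_mult zdet_S zdet_R del: mult_1_left) simp
  also have "\<dots> = T" by (simp add: T_def power3_eq_cube)
  finally show ?thesis .
qed

definition g0m :: z2 where "g0m = zS * zR * zS * zR * zR"
definition g0 :: sl2z where "g0 = ofz g0m"

lemma Phi_g0: "Phi g0 = h0"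
proof -
  have d: "zdet g0m = 1" by (simp add: g0m_def zdet_mult zdet_S zdet_R)
  have "Phi g0 = P.phi (1 * zS * zR * zS * zR * zR)" by (simp add: Phi_def g0_def toz_ofz[OF d, unfolded g0m_def] g0m_def)
  also have "\<dots> = X * Y * X * Y * Y"
    by (simp add: P.phi_S P.phi_R P.phi_one zdet_mult zdet_S zdet_R del: mult_1_left) simp
  finally show ?thesis by (simp add: h0_def)
qed

fun sp :: "sl2z \<Rightarrow> nat \<Rightarrow> sl2z" where
  "sp g 0 = 0"
| "sp g (Suc n) = g + sp g n"

lemma Phi_sp: "Phi (sp g n) = (Phi g)^n"
  by (induction n) (simp_all add: Phi_zero Phi_plus)

lemma sp_add: "sp g (m + n) = sp g m + sp g n"
  by (induction m) (simp_all add: add.assoc)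


definition Pr :: "zsl2 \<Rightarrow> (m2 \<Rightarrow>\<^sub>0 int)" where
  "Pr r = frag_extend (\<lambda>g. frag_of (Phi g)) r"

definition Kset :: "zsl2 set" where
  "Kset = {r. \<forall>h. (7::int) dvd Poly_Mapping.lookup (Pr r) h}"

lemma ofint_mult: "(of_int c :: ('a::monoid_add) \<Rightarrow>\<^sub>0 int) * s = frag_cmul c s"
proof -
  have "Poly_Mapping.single 0 (of_int c :: int) = (of_int c :: 'a \<Rightarrow>\<^sub>0 int)" by (rule single_of_int)
  then have "(of_int c :: 'a \<Rightarrow>\<^sub>0 int) = Poly_Mapping.single 0 c" by simp
  then have "(of_int c :: 'a \<Rightarrow>\<^sub>0 int) * s = Poly_Mapping.map ((*) c) s"
    by (simp add: mult_map_scale_conv_mult)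
  also have "\<dots> = frag_cmul c s"
    by (rule poly_mapping_eqI) (simp add: map.rep_eq when_def)
  finally show ?thesis .
qed

lemma dvd_cmul: assumes "\<forall>h. (7::int) dvd Poly_Mapping.lookup p h" shows "\<exists>q. p = frag_cmul 7 q"
proof -
  let ?f = "\<lambda>x. Poly_Mapping.lookup p x div 7"
  have fin: "finite {x. ?f x \<noteq> 0}"
    by (rule finite_subset[of _ "{x. Poly_Mapping.lookup p x \<noteq> 0}"]) auto
  have "p = frag_cmul 7 (Abs_poly_mapping ?f)"
    by (rule poly_mapping_eqI) (use assms fin in simp)
  then show ?thesis by blast
qed

lemma dvd_frag_extend:
  assumes "\<forall>h. (7::int) dvd Poly_Mapping.lookup p h"
  shows "\<forall>k. (7::int) dvd Poly_Mapping.lookup (frag_extend F p) k"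
proof -
  obtain q where "p = frag_cmul 7 q" using dvd_cmul[OF assms] by blast
  then show ?thesis by (simp add: frag_extend_cmul)
qed

lemma Pr_diff: "Pr (a - b) = Pr a - Pr b" by (simp add: Pr_def frag_extend_diff)
lemma Pr_add: "Pr (a + b) = Pr a + Pr b" by (simp add: Pr_def frag_extend_add)
lemma Pr_zero: "Pr 0 = 0" by (simp add: Pr_def)
lemma Pr_of: "Pr (frag_of g) = frag_of (Phi g)" by (simp add: Pr_def)
lemma Pr_cmul: "Pr (frag_cmul c a) = frag_cmul c (Pr a)" by (simp add: Pr_def frag_extend_cmul)

lemma K_diff: "a \<in> Kset \<Longrightarrow> b \<in> Kset \<Longrightarrow> a - b \<in> Kset"
  by (simp add: Kset_def Pr_diff lookup_minus)
lemma K_add: "a \<in> Kset \<Longrightarrow> b \<in> Kset \<Longrightarrow> a + b \<in> Kset"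
  by (simp add: Kset_def Pr_add lookup_add)
lemma K_zero: "0 \<in> Kset" by (simp add: Kset_def Pr_zero)

lemma K_sum: "finite A \<Longrightarrow> (\<forall>i\<in>A. f i \<in> Kset) \<Longrightarrow> sum f A \<in> Kset"
  by (induction A rule: finite_induct) (auto intro: K_add K_zero)

lemma Pr_left: "Pr (frag_of g * r) = frag_extend (\<lambda>k. frag_of (Phi g * k)) (Pr r)"
using subset_UNIV proof (induction r rule: frag_induction)
  case zero then show ?case by (simp add: Pr_zero)
next
  case (one x) then show ?case by (simp add: mult_single Pr_of Phi_plus)
next
  case (diff a b) then show ?case by (simp add: right_diff_distrib Pr_diff frag_extend_diff)
qed

lemma Pr_right: "Pr (r * frag_of g) = frag_extend (\<lambda>k. frag_of (k * Phi g)) (Pr r)"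
using subset_UNIV proof (induction r rule: frag_induction)
  case zero then show ?case by (simp add: Pr_zero)
next
  case (one x) then show ?case by (simp add: mult_single Pr_of Phi_plus)
next
  case (diff a b) then show ?case by (simp add: left_diff_distrib Pr_diff frag_extend_diff)
qed

lemma K_left: "r \<in> Kset \<Longrightarrow> a * r \<in> Kset"
using subset_UNIV proof (induction a rule: frag_induction)
  case zero then show ?case by (simp add: K_zero)
next
  case (one x) then show ?case by (simp add: Kset_def Pr_left dvd_frag_extend)
next
  case (diff a b) then show ?case by (simp add: left_diff_distrib K_diff)
qed

lemma K_right: "r \<in> Kset \<Longrightarrow> r * a \<in> Kset"
using subset_UNIV proof (induction a rule: frag_induction)
  case zero then show ?case by (simp add: K_zero)
next
  case (one x) then show ?case by (simp add: Kset_def Pr_right dvd_frag_extend)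
next
  case (diff a b) then show ?case by (simp add: right_diff_distrib K_diff)
qed


definition J :: "(nat \<Rightarrow>\<^sub>0 int) \<Rightarrow> zsl2" where
  "J a = frag_extend (\<lambda>k. frag_of (sp u k)) a"

lemma J_of: "J (frag_of k) = frag_of (sp u k)" by (simp add: J_def)
lemma J_diff: "J (a - b) = J a - J b" by (simp add: J_def frag_extend_diff)
lemma J_zero: "J 0 = 0" by (simp add: J_def)
lemma J_cmul: "J (frag_cmul c a) = frag_cmul c (J a)" by (simp add: J_def frag_extend_cmul)

lemma J_mult_of: "J (frag_of k * b) = frag_of (sp u k) * J b"
  using subset_UNIV
proof (induction b rule: frag_induction)
  case zero then show ?case by (simp add: J_zero)
next
  case (one x) then show ?case by (simp add: mult_single J_of sp_add)
next
  case (diff a b) then show ?case by (simp add: right_diff_distrib J_diff)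
qed

lemma J_mult: "J (a * b) = J a * J b"
  using subset_UNIV
proof (induction a rule: frag_induction)
  case zero then show ?case by (simp add: J_zero)
next
  case (one x) then show ?case by (simp add: J_mult_of J_of)
next
  case (diff a b) then show ?case by (simp add: left_diff_distrib J_diff)
qed

lemma one_frag: "(1 :: 'a::monoid_add \<Rightarrow>\<^sub>0 int) = frag_of 0"
  by simp

lemma J_one: "J 1 = 1"
  by (simp only: one_frag J_of) simp

lemma J_pow: "J (a^n) = (J a)^n"
  by (induction n) (simp_all add: J_one J_mult)

lemma frag_pow: "(frag_of (1::nat))^n = frag_of n"
  by (induction n) (simp_all add: mult_single)

lemma binom7: fixes x :: "'a::comm_ring_1"
  shows "(x - 1)^7 = x^7 - 1 - 7 * (x^6 - 3*x^5 + 5*x^4 - 5*x^3 + 3*x^2 - x)"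
  by (simp add: eval_nat_numeral algebra_simps)

lemma e_J: "grp_elt u = J (frag_of 1)"
  by (simp add: grp_elt_def J_of)

lemma seven_cmul: "(7 :: 'a::monoid_add \<Rightarrow>\<^sub>0 int) * w = frag_cmul 7 w"
  using ofint_mult[of 7 w] by simp

lemma e7_K: "(grp_elt u - 1 :: zsl2)^7 \<in> Kset"
proof -
  define x :: "nat \<Rightarrow>\<^sub>0 int" where "x = frag_of 1"
  define w where "w = x^6 - 3*x^5 + 5*x^4 - 5*x^3 + 3*x^2 - x"
  have "(grp_elt u - 1 :: zsl2)^7 = J ((x - 1)^7)"
    by (simp add: e_J x_def J_pow J_diff J_one)
  also have "\<dots> = J (x^7) - J 1 - frag_cmul 7 (J w)"
    by (simp only: binom7 w_def[symmetric] seven_cmul J_diff J_cmul)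
  also have "x^7 = frag_of 7" unfolding x_def by (rule frag_pow)
  finally have e: "(grp_elt u - 1 :: zsl2)^7 = frag_of (sp u 7) - 1 - frag_cmul 7 (J w)"
    by (simp only: J_of J_one)
  have p1: "Pr 1 = frag_of 1" by (simp only: one_frag Pr_of Phi_zero)
  have "Pr (frag_of (sp u 7)) = Pr 1"
    unfolding p1 by (simp add: Pr_of Phi_sp Phi_u T7)
  then show ?thesis
    unfolding e by (simp add: Kset_def Pr_diff Pr_cmul lookup_minus)
qed


lemma Pr_sum: "finite A \<Longrightarrow> Pr (sum f A) = (\<Sum>i\<in>A. Pr (f i))"
  by (simp add: Pr_def frag_extend_sum o_def)

lemma I_sub_K:
  assumes "n \<ge> 7"
  shows "twosided_ideal_gen ((grp_elt u - 1 :: zsl2) ^ n) \<subseteq> Kset"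
proof
  fix z assume "z \<in> twosided_ideal_gen ((grp_elt u - 1 :: zsl2) ^ n)"
  then obtain m :: nat and a b where z: "z = (\<Sum>i<m. a i * (grp_elt u - 1 :: zsl2)^n * b i)"
    unfolding twosided_ideal_gen_def by blast
  have "(grp_elt u - 1 :: zsl2)^n = (grp_elt u - 1)^(n-7) * (grp_elt u - 1)^7"
    using assms by (simp add: power_add[symmetric])
  then have xK: "(grp_elt u - 1 :: zsl2)^n \<in> Kset" using K_left[OF e7_K] by simp
  have "\<forall>i\<in>{..<m}. a i * (grp_elt u - 1 :: zsl2)^n * b i \<in> Kset"
    using xK by (auto intro: K_right K_left)
  then show "z \<in> Kset" unfolding z by (intro K_sum) simp_all
qed

theorem proposition2:
  fixes n :: nat
  assumes "n \<ge> 7"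
  shows "\<not> quotient_fg_Z_module
           (twosided_ideal_gen ((grp_elt u - 1 :: zsl2) ^ n))"
proof
  assume "quotient_fg_Z_module (twosided_ideal_gen ((grp_elt u - 1 :: zsl2) ^ n))"
  then obtain S where S: "finite S"
    and gen: "\<forall>r. \<exists>c :: zsl2 \<Rightarrow> int. r - (\<Sum>s\<in>S. of_int (c s) * s) \<in> twosided_ideal_gen ((grp_elt u - 1 :: zsl2) ^ n)"
    unfolding quotient_fg_Z_module_def by blast
  define F where "F = (\<Union>s\<in>S. Poly_Mapping.keys (Pr s))"
  have finF: "finite F" unfolding F_def using S by simp
  have "inj (\<lambda>m::nat. h0^m)" by (rule injI) (rule h0_pow_inj)
  then have "infinite (range (\<lambda>m::nat. h0^m))" by (rule range_inj_infinite)
  then have "\<not> (range (\<lambda>m::nat. h0^m) \<subseteq> F)" using finF finite_subset by blast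
  then obtain m where m: "h0^m \<notin> F" by blast
  define g where "g = sp g0 m"
  have Pg: "Phi g = h0^m" by (simp add: g_def Phi_sp Phi_g0)
  obtain c where c: "frag_of g - (\<Sum>s\<in>S. of_int (c s) * s) \<in> twosided_ideal_gen ((grp_elt u - 1 :: zsl2) ^ n)"
    using gen by blast
  then have inK: "frag_of g - (\<Sum>s\<in>S. of_int (c s) * s) \<in> Kset" using I_sub_K[OF assms] by blast
  have z: "Poly_Mapping.lookup (Pr s) (h0^m) = 0" if "s \<in> S" for s
    using m that unfolding F_def by (auto simp: in_keys_iff)
  have one: "Poly_Mapping.lookup (Pr (frag_of g - (\<Sum>s\<in>S. of_int (c s) * s))) (h0^m) = 1"
    using S z by (simp add: Pr_diff Pr_sum Pr_of Pg ofint_mult Pr_cmul lookup_minus lookup_sum)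
  from inK have "(7::int) dvd Poly_Mapping.lookup (Pr (frag_of g - (\<Sum>s\<in>S. of_int (c s) * s))) (h0^m)"
    by (simp add: Kset_def)
  then have "(7::int) dvd 1" by (simp only: one)
  then show False by simp
qed


end
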